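(* Let $n\ge1$ and let $A_1,\ldots,A_n$ be operators on $\mathbb{C}^{2^n}$ such that $A_x^\dagger=A_x$ and $A_xA_y+A_yA_x=2\delta_{xy}\mathbb{1}$ for all $x,y\in\{1,\ldots,n\}$. Define the steering functional $F=\{F_x^a: x=1,\ldots,n,\ a=1,2\}$ by $F_x^1=\tfrac12A_x$, $F_x^2=-\tfrac12A_x$. Then $$V(F)\ \ge\ \sqrt{\tfrac{n}{2}}.$$
   Context: Here $d=2^n$. An $(n,2,d)$-assemblage is a family $\sigma=\{\sigma_x^a: x=1,\ldots,n,\ a=1,2\}$ of positive semidefinite operators on $\mathbb{C}^d$ such that $\sigma_x^1+\sigma_x^2$ does not depend on $x$ and has trace $1$; $\mathcal{Q}$ is the set of all such assemblages. An assemblage has a local hidden state (LHS) model if there exist a finite index set $\Lambda$, weights $q_\lambda\ge0$ with $\sum_\lambda q_\lambda=1$, density matrices $\sigma_\lambda$ on $\mathbb{C}^d$, and probability distributions $\{p_\lambda(a|x)\}_{a=1,2}$ for each $x,\lambda$, such that $\sigma_x^a=\sum_\lambda q_\lambda p_\lambda(a|x)\sigma_\lambda$ for all $x,a$; $\mathcal{L}$ is the set of such assemblages. For a steering functional $F=\{F_x^a\}$ (a family of $d\times d$ matrices), $\langle F,\sigma\rangle=\mathrm{Tr}\big(\sum_{x,a}F_x^a\sigma_x^a\big)$, $S_{LHS}(F)=\sup\{|\langle F,\sigma\rangle|:\sigma\in\mathcal{L}\}$, $S_Q(F)=\sup\{|\langle F,\sigma\rangle|:\sigma\in\mathcal{Q}\}$,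 and $V(F)=S_Q(F)/S_{LHS}(F)$. *)

theory Defs
  imports "HOL-Analysis.Analysis"
begin

text \<open>Operators on \<open>\<complex>^d\<close> are represented as \<open>complex^'d^'d\<close>, with \<open>d = CARD('d)\<close>.
  Settings indices \<open>x = 1..n\<close> are represented by a finite type \<open>'x\<close> with \<open>n = CARD('x)\<close>;
  outcome indices \<open>a\<close> are natural numbers in \<open>{1,2}\<close>.\<close>

definition cadj :: "complex^'d^'d \<Rightarrow> complex^'d^'d" where
  "cadj M = (\<chi> i j. cnj (M $ j $ i))"

definition psd :: "complex^'d^'d \<Rightarrow> bool" where
  "psd M \<longleftrightarrow> cadj M = M \<and>
     (\<forall>v :: complex^'d. 0 \<le> Re (\<Sum>i\<in>UNIV. cnj (v $ i) * (M *v v) $ i))"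

definition density :: "complex^'d^'d \<Rightarrow> bool" where
  "density \<rho> \<longleftrightarrow> psd \<rho> \<and> trace \<rho> = 1"

definition assemblage :: "('x::finite \<Rightarrow> nat \<Rightarrow> complex^'d^'d) \<Rightarrow> bool" where
  "assemblage \<sigma> \<longleftrightarrow>
     (\<forall>x. \<forall>a\<in>{1,2}. psd (\<sigma> x a)) \<and>
     (\<forall>x y. \<sigma> x 1 + \<sigma> x 2 = \<sigma> y 1 + \<sigma> y 2) \<and>
     (\<forall>x. trace (\<sigma> x 1 + \<sigma> x 2) = 1)"

text \<open>Assemblages with a local hidden state model: the set \<open>\<L>\<close>.
  The finite index set \<open>\<Lambda>\<close> is \<open>{..<m}\<close>.\<close>
definition lhs_model :: "('x::finite \<Rightarrow> nat \<Rightarrow> complex^'d^'d) \<Rightarrow> bool" where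
  "lhs_model \<sigma> \<longleftrightarrow>
     (\<exists>(m::nat) (q::nat \<Rightarrow> real) (\<rho>::nat \<Rightarrow> complex^'d^'d) (p::nat \<Rightarrow> 'x \<Rightarrow> nat \<Rightarrow> real).
        (\<forall>l<m. 0 \<le> q l) \<and> (\<Sum>l<m. q l) = 1 \<and>
        (\<forall>l<m. density (\<rho> l)) \<and>
        (\<forall>l<m. \<forall>x. 0 \<le> p l x 1 \<and> 0 \<le> p l x 2 \<and> p l x 1 + p l x 2 = 1) \<and>
        (\<forall>x. \<forall>a\<in>{1,2}. \<sigma> x a = (\<Sum>l<m. (q l * p l x a) *\<^sub>R \<rho> l)))"

definition pairing :: "('x::finite \<Rightarrow> nat \<Rightarrow> complex^'d^'d) \<Rightarrow> ('x \<Rightarrow> nat \<Rightarrow> complex^'d^'d) \<Rightarrow> complex" where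
  "pairing F \<sigma> = trace (\<Sum>x\<in>UNIV. \<Sum>a\<in>{1,2}. F x a ** \<sigma> x a)"

definition S_LHS :: "('x::finite \<Rightarrow> nat \<Rightarrow> complex^'d^'d) \<Rightarrow> real" where
  "S_LHS F = Sup {cmod (pairing F \<sigma>) | \<sigma>. lhs_model \<sigma>}"

definition S_Q :: "('x::finite \<Rightarrow> nat \<Rightarrow> complex^'d^'d) \<Rightarrow> real" where
  "S_Q F = Sup {cmod (pairing F \<sigma>) | \<sigma>. assemblage \<sigma>}"

definition violation :: "('x::finite \<Rightarrow> nat \<Rightarrow> complex^'d^'d) \<Rightarrow> real" where
  "violation F = S_Q F / S_LHS F"

end

theory Submission
  imports Defs
begin
definition qf :: "complex^'d^'d \<Rightarrow> complex^'d \<Rightarrow> complex" where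
  "qf M v = (\<Sum>i\<in>UNIV. cnj (v $ i) * (M *v v) $ i)"
lemma herm_entry: assumes "cadj M = M" shows "M$i$j = cnj (M$j$i)"
proof -
  have "M$i$j = cadj M $ i $ j" using assms by simp
  then show ?thesis by (simp add: cadj_def)
qed
lemma herm_cnj: assumes "cadj M = M" shows "cnj (M$i$j) = M$j$i"
  using herm_entry[OF assms, of j i] by simp

lemma mm_add_r: "((A::'a::semiring_1^'n^'m) + B) ** C = A ** C + B ** C"
  by (simp add: matrix_matrix_mult_def vec_eq_iff distrib_right sum.distrib)
lemma mm_diff_r: "((A::'a::ring_1^'n^'m) - B) ** C = A ** C - B ** C"
  by (simp add: matrix_matrix_mult_def vec_eq_iff left_diff_distrib sum_subtractf)
lemma mm_diff_l: "(C::'a::ring_1^'n^'m) ** (A - B) = C ** A - C ** B"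
  by (simp add: matrix_matrix_mult_def vec_eq_iff right_diff_distrib sum_subtractf)
lemma mm_scaleR_r: "(A::complex^'n^'m) ** (k *\<^sub>R B) = k *\<^sub>R (A ** B)"
  by (simp add: matrix_scalar_ac scalar_matrix_assoc)
lemma mm_scaleR_l: "(k *\<^sub>R (A::complex^'n^'m)) ** B = k *\<^sub>R (A ** B)"
  by (simp add: scalar_matrix_assoc)

lemma qf_real: assumes "cadj M = M" shows "Im (qf M v) = 0"
proof -
  have "cnj (qf M v) = qf M v"
  proof -
    have "cnj (qf M v) = (\<Sum>i\<in>UNIV. \<Sum>j\<in>UNIV. v$i * M$j$i * cnj (v$j))"
      unfolding qf_def matrix_vector_mult_def
      by (simp add: sum_distrib_left herm_cnj[OF assms] mult_ac)
    also have "\<dots> = (\<Sum>j\<in>UNIV. \<Sum>i\<in>UNIV. v$i * M$j$i * cnj (v$j))"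
      by (rule sum.swap)
    also have "\<dots> = qf M v"
      unfolding qf_def matrix_vector_mult_def
      by (simp add: sum_distrib_left mult_ac)
    finally show ?thesis .
  qed
  then have "Im (cnj (qf M v)) = Im (qf M v)" by simp
  then show ?thesis by simp
qed

lemma cadj_add: "cadj (M + N) = cadj M + cadj N"
  by (simp add: cadj_def vec_eq_iff)
lemma cadj_diff: "cadj (M - N) = cadj M - cadj N"
  by (simp add: cadj_def vec_eq_iff)
lemma cadj_scaleR: "cadj (c *\<^sub>R M) = c *\<^sub>R cadj M"
  by (simp add: cadj_def vec_eq_iff)
lemma cadj_mat1: "cadj (mat 1) = mat 1"
  by (simp add: cadj_def vec_eq_iff mat_def)

lemma trace_PsP:
  assumes "cadj P = P"
  shows "trace (P ** S ** P) = (\<Sum>i\<in>UNIV. qf S (column i P))"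
proof -
  have "trace (P ** S ** P) = (\<Sum>i\<in>UNIV. \<Sum>k\<in>UNIV. \<Sum>j\<in>UNIV. P$i$j * S$j$k * P$k$i)"
    by (simp add: trace_def matrix_matrix_mult_def sum_distrib_right)
  also have "\<dots> = (\<Sum>i\<in>UNIV. \<Sum>j\<in>UNIV. \<Sum>k\<in>UNIV. P$i$j * S$j$k * P$k$i)"
    by (rule sum.cong[OF refl], rule sum.swap)
  also have "\<dots> = (\<Sum>i\<in>UNIV. qf S (column i P))"
    unfolding qf_def matrix_vector_mult_def column_def
    by (simp add: sum_distrib_left herm_cnj[OF assms] mult_ac)
  finally show ?thesis .
qed

lemma proj_trace:
  assumes "cadj R = R" "R ** R = R" "psd S"
  shows "Im (trace (R ** S)) = 0 \<and> 0 \<le> Re (trace (R ** S))"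
proof -
  have "trace (R ** S) = trace ((R ** R) ** S)" using assms by simp
  also have "\<dots> = trace (R ** (R ** S))" by (simp add: matrix_mul_assoc)
  also have "\<dots> = trace ((R ** S) ** R)" by (rule trace_mul_sym)
  also have "\<dots> = (\<Sum>i\<in>UNIV. qf S (column i R))" by (rule trace_PsP[OF assms(1)])
  finally have e: "trace (R ** S) = (\<Sum>i\<in>UNIV. qf S (column i R))" .
  have h: "cadj S = S" using assms(3) psd_def by blast
  have "Im (trace (R ** S)) = 0" unfolding e by (simp add: qf_real[OF h])
  moreover have "0 \<le> Re (trace (R ** S))" unfolding e Re_sum
    using assms(3) unfolding psd_def qf_def by (simp add: sum_nonneg)
  ultimately show ?thesis by blast
qed

lemma invol_proj:
  assumes h: "cadj A = A" and sq: "A ** A = mat 1" and s: "s = 1 \<or> s = -1"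
  defines "R \<equiv> (1/2::real) *\<^sub>R (mat 1 + s *\<^sub>R A)"
  shows "cadj R = R" "R ** R = R"
proof -
  show "cadj R = R" unfolding R_def by (simp add: cadj_scaleR cadj_add cadj_mat1 h)
  have ss: "s * s = 1" using s by auto
  define X where "X = mat 1 + s *\<^sub>R A"
  have AX: "A ** X = s *\<^sub>R mat 1 + A"
    unfolding X_def by (simp only: matrix_add_ldistrib matrix_mul_rid mm_scaleR_r sq add.commute)
  have e1: "X ** X = X + s *\<^sub>R (A ** X)"
    unfolding X_def by (simp only: mm_add_r matrix_mul_lid mm_scaleR_l)
  have e2: "s *\<^sub>R (A ** X) = X"
    unfolding AX unfolding X_def by (simp only: scaleR_add_right scaleR_scaleR ss scaleR_one)
  have XX: "X ** X = 2 *\<^sub>R X" unfolding e1 e2 by (simp only: scaleR_2)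
  have "R ** R = (1/2::real) *\<^sub>R ((1/2::real) *\<^sub>R (X ** X))"
    unfolding R_def X_def[symmetric] by (simp only: mm_scaleR_l mm_scaleR_r)
  also have "\<dots> = ((1/2::real) * ((1/2) * 2)) *\<^sub>R X" unfolding XX by (simp only: scaleR_scaleR)
  also have "\<dots> = R"
  proof -
    have "(1/2::real) * ((1/2) * 2) = 1/2" by simp
    then show ?thesis unfolding R_def X_def by (simp only:)
  qed
  finally show "R ** R = R" .
qed

lemma key:
  assumes h: "cadj A = A" and sq: "A ** A = mat 1" and p: "psd S"
  shows "Im (trace S) = 0" "Im (trace (A ** S)) = 0" "0 \<le> Re (trace S)"
    "\<bar>Re (trace (A ** S))\<bar> \<le> Re (trace S)"
proof -
  define P where "P = (1/2::real) *\<^sub>R (mat 1 + (1::real) *\<^sub>R A)"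
  define Q where "Q = (1/2::real) *\<^sub>R (mat 1 + (-1::real) *\<^sub>R A)"
  have P: "Im (trace (P ** S)) = 0 \<and> 0 \<le> Re (trace (P ** S))"
    using proj_trace[OF invol_proj[OF h sq, of 1] p] P_def by simp
  have Q: "Im (trace (Q ** S)) = 0 \<and> 0 \<le> Re (trace (Q ** S))"
    using proj_trace[OF invol_proj[OF h sq, of "-1"] p] Q_def by simp
  have e1: "trace S = trace (P ** S) + trace (Q ** S)"
  proof -
    have "P + Q = mat 1" unfolding P_def Q_def by (simp add: scaleR_add_right[symmetric] vec_eq_iff mat_def)
    then have "trace S = trace ((P + Q) ** S)" by simp
    then show ?thesis by (simp add: mm_add_r trace_add)
  qed
  have e2: "trace (A ** S) = trace (P ** S) - trace (Q ** S)"
  proof -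
    have "P - Q = A" unfolding P_def Q_def
      apply (simp add: vec_eq_iff mat_def)
      apply (simp add: scaleR_conv_of_real algebra_simps)
      done
    then have "trace (A ** S) = trace ((P - Q) ** S)" by simp
    then show ?thesis by (simp add: mm_diff_r trace_sub)
  qed
  show "Im (trace S) = 0" "Im (trace (A ** S)) = 0" "0 \<le> Re (trace S)"
    "\<bar>Re (trace (A ** S))\<bar> \<le> Re (trace S)"
    using P Q unfolding e1 e2 by auto
qed



lemma trace_sum: "finite S \<Longrightarrow> trace (\<Sum>l\<in>S. (M l :: complex^'n^'n)) = (\<Sum>l\<in>S. trace (M l))"
  by (induction S rule: finite_induct) (auto simp: trace_add trace_0[simplified])

lemma trace_scaleR: "trace (c *\<^sub>R (M::complex^'n^'n)) = c *\<^sub>R trace M"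
  by (simp add: trace_def scaleR_sum_right)

lemma mm_sum_l: "finite S \<Longrightarrow> (\<Sum>l\<in>S. M l) ** (B::'a::semiring_1^'n^'n) = (\<Sum>l\<in>S. M l ** B)"
  by (induction S rule: finite_induct) (auto simp: mm_add_r)

lemma mm_sum_r: "finite S \<Longrightarrow> (B::'a::semiring_1^'n^'n) ** (\<Sum>l\<in>S. M l) = (\<Sum>l\<in>S. B ** M l)"
  by (induction S rule: finite_induct) (auto simp: matrix_add_ldistrib)

lemma cadj_sum: "finite S \<Longrightarrow> cadj (\<Sum>l\<in>S. M l) = (\<Sum>l\<in>S. cadj (M l))"
  by (induction S rule: finite_induct) (auto simp: cadj_add cadj_def vec_eq_iff)

lemma trace_lin: "finite S \<Longrightarrow>
   trace ((A::complex^'n^'n) ** (\<Sum>l\<in>S. c l *\<^sub>R M l)) = (\<Sum>l\<in>S. c l *\<^sub>R trace (A ** M l))"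
  by (simp add: mm_sum_r trace_sum matrix_scalar_ac scalar_matrix_assoc[symmetric] trace_scaleR)

lemma sq_from_double: "(M::complex^'n^'n) + M = mat 2 \<Longrightarrow> M = mat 1"
  by (simp add: vec_eq_iff mat_def) (metis (no_types, lifting) add_cancel_right_left mult_2 mult_cancel_left one_add_one zero_neq_numeral mult_2_right)

lemma pairing_eq:
  assumes F1: "\<And>x. F x 1 = (1/2::real) *\<^sub>R A x"
    and F2: "\<And>x. F x 2 = - ((1/2::real) *\<^sub>R A x)"
  shows "pairing F \<sigma> = (\<Sum>x\<in>UNIV. (1/2::real) *\<^sub>R trace (A x ** \<sigma> x 1) - (1/2::real) *\<^sub>R trace (A x ** \<sigma> x 2))"
proof -
  have F1': "F x (Suc 0) = (1/2::real) *\<^sub>R A x" for x using F1 by simp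
  show ?thesis unfolding pairing_def
  by (simp add: trace_sum F1' F1 F2 trace_add trace_scaleR scalar_matrix_assoc[symmetric] trace_sub
      mm_diff_r[where A=0, simplified])
qed



lemma density_bound:
  fixes A :: "'x::finite \<Rightarrow> complex^'d^'d"
  assumes herm: "\<And>x. cadj (A x) = A x"
    and anticomm: "\<And>x y. A x ** A y + A y ** A x = (if x = y then mat 2 else mat 0)"
    and dens: "density \<rho>"
  shows "(\<Sum>x\<in>UNIV. \<bar>Re (trace (A x ** \<rho>))\<bar>) \<le> sqrt (real CARD('x))"
proof -
  define t where "t x = Re (trace (A x ** \<rho>))" for x
  define N where "N = sqrt (\<Sum>x\<in>UNIV. (t x)^2)"
  have sqA: "A x ** A x = mat 1" for x using anticomm[of x x] by (simp add: sq_from_double)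
  have p: "psd \<rho>" and tr: "trace \<rho> = 1" using dens density_def by auto
  have tre: "trace (A x ** \<rho>) = complex_of_real (t x)" for x
    using key(2)[OF herm sqA p, of x] unfolding t_def by (simp add: complex_eq_iff)
  have N1: "N \<le> 1"
  proof (cases "N = 0")
    case True then show ?thesis by simp
  next
    case False
    have "(\<Sum>x\<in>UNIV. (t x)^2) \<ge> 0" by (simp add: sum_nonneg)
    then have Npos: "N > 0" using False N_def by simp
    have NN: "N^2 = (\<Sum>x\<in>UNIV. (t x)^2)" unfolding N_def by (simp add: sum_nonneg)
    define c where "c x = t x / N" for x
    define B where "B = (\<Sum>x\<in>UNIV. c x *\<^sub>R A x)"
    have hB: "cadj B = B" unfolding B_def by (simp add: cadj_sum cadj_scaleR herm)
    have csq: "(\<Sum>x\<in>UNIV. c x * c x) = 1"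
    proof -
      have "(\<Sum>x\<in>UNIV. c x * c x) = (\<Sum>x\<in>UNIV. (t x)^2) / N^2"
        unfolding c_def by (simp add: sum_divide_distrib power2_eq_square)
      moreover have "N^2 > 0" using Npos by simp
      ultimately show ?thesis using NN by simp
    qed
    define G where "G x y = (c x * c y) *\<^sub>R (A x ** A y)" for x y
    have BB0: "B ** B = (\<Sum>x\<in>UNIV. \<Sum>y\<in>UNIV. G y x)"
      unfolding B_def G_def
      by (simp add: mm_sum_l mm_sum_r mm_scaleR_l mm_scaleR_r scaleR_sum_right mult.commute)
    have BB: "B ** B = (\<Sum>x\<in>UNIV. \<Sum>y\<in>UNIV. G x y)"
      unfolding BB0 by (rule sum.swap)
    have "(\<Sum>x\<in>UNIV. \<Sum>y\<in>UNIV. G x y) + (\<Sum>x\<in>UNIV. \<Sum>y\<in>UNIV. G x y)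
        = (\<Sum>x\<in>UNIV. \<Sum>y\<in>UNIV. G x y) + (\<Sum>x\<in>UNIV. \<Sum>y\<in>UNIV. G y x)"
      by (simp add: sum.swap[of G])
    also have "\<dots> = (\<Sum>x\<in>UNIV. \<Sum>y\<in>UNIV. G x y + G y x)"
      by (simp add: sum.distrib)
    also have "\<dots> = (\<Sum>x\<in>UNIV. \<Sum>y\<in>UNIV. (c x * c y) *\<^sub>R (if x = y then mat 2 else mat 0))"
      unfolding G_def by (simp add: scaleR_add_right[symmetric] anticomm mult.commute del: mat_0)
    also have "\<dots> = (\<Sum>x\<in>UNIV. (c x * c x) *\<^sub>R mat 2)"
      by (simp add: if_distrib cong: if_cong)
    also have "\<dots> = mat 2" by (simp add: scaleR_sum_left[symmetric] csq)
    finally have "B ** B = mat 1" using BB sq_from_double by metis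
    have "trace (B ** \<rho>) = (\<Sum>x\<in>UNIV. c x *\<^sub>R trace (A x ** \<rho>))"
      unfolding B_def by (simp add: mm_sum_l trace_sum scalar_matrix_assoc[symmetric] trace_scaleR)
    then have "Re (trace (B ** \<rho>)) = (\<Sum>x\<in>UNIV. c x * t x)" by (simp add: tre)
    also have "\<dots> = N^2 / N" unfolding c_def NN by (simp add: sum_divide_distrib power2_eq_square)
    also have "\<dots> = N" using Npos by (simp add: power2_eq_square)
    finally have "Re (trace (B ** \<rho>)) = N" .
    with key(4)[OF hB \<open>B ** B = mat 1\<close> p] tr show ?thesis by simp
  qed
  have "(\<Sum>x\<in>UNIV. \<bar>t x\<bar>) = (\<Sum>x\<in>UNIV. \<bar>t x\<bar> * \<bar>(\<lambda>_. 1::real) x\<bar>)" by simp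
  also have "\<dots> \<le> L2_set t UNIV * L2_set (\<lambda>_::'x. 1::real) UNIV" by (rule L2_set_mult_ineq)
  also have "\<dots> = N * sqrt (real CARD('x))" by (simp add: L2_set_def N_def L2_set_constant)
  also have "\<dots> \<le> sqrt (real CARD('x))" using N1 by (simp add: mult_left_le_one_le)
  finally show ?thesis unfolding t_def .
qed



lemma psd_proj:
  fixes R :: "complex^'d^'d"
  assumes h: "cadj R = R" and idem: "R ** R = R"
  shows "psd R"
proof -
  have "0 \<le> Re (\<Sum>i\<in>UNIV. cnj (v $ i) * (R *v v) $ i)" for v :: "complex^'d"
  proof -
    define w where "w = R *v v"
    have "(\<Sum>i\<in>UNIV. cnj (v $ i) * (R *v v) $ i) = (\<Sum>i\<in>UNIV. cnj (v $ i) * (R *v w) $ i)"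
      unfolding w_def by (simp add: matrix_vector_mul_assoc idem)
    also have "\<dots> = (\<Sum>i\<in>UNIV. \<Sum>j\<in>UNIV. cnj (v $ i) * R$i$j * w$j)"
      by (simp add: matrix_vector_mult_def sum_distrib_left mult_ac)
    also have "\<dots> = (\<Sum>j\<in>UNIV. \<Sum>i\<in>UNIV. cnj (v $ i) * R$i$j * w$j)" by (rule sum.swap)
    also have "\<dots> = (\<Sum>j\<in>UNIV. cnj (w $ j) * w $ j)"
    proof -
      have cw: "cnj (w $ j) = (\<Sum>i\<in>UNIV. cnj (v $ i) * R$i$j)" for j
        unfolding w_def matrix_vector_mult_def by (simp add: herm_cnj[OF h] mult.commute)
      show ?thesis unfolding cw by (simp add: sum_distrib_right)
    qed
    finally have e: "(\<Sum>i\<in>UNIV. cnj (v $ i) * (R *v v) $ i) = (\<Sum>j\<in>UNIV. cnj (w $ j) * w $ j)" .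
    show ?thesis unfolding e Re_sum by (rule sum_nonneg) simp
  qed
  then show ?thesis using h psd_def by blast
qed

lemma psd_scale:
  fixes M :: "complex^'d^'d"
  assumes "psd M" "0 \<le> c"
  shows "psd (c *\<^sub>R M)"
proof -
  have "Re (\<Sum>i\<in>UNIV. cnj (v $ i) * ((c *\<^sub>R M) *v v) $ i) = c * Re (\<Sum>i\<in>UNIV. cnj (v $ i) * (M *v v) $ i)"
    for v :: "complex^'d"
  proof -
    have "((c *\<^sub>R M) *v v) $ i = c *\<^sub>R ((M *v v) $ i)" for i
      by (simp add: matrix_vector_mult_def scaleR_sum_right)
    then have "(\<Sum>i\<in>UNIV. cnj (v $ i) * ((c *\<^sub>R M) *v v) $ i) = c *\<^sub>R (\<Sum>i\<in>UNIV. cnj (v $ i) * (M *v v) $ i)"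
      by (simp add: scaleR_sum_right)
    then show ?thesis by simp
  qed
  then show ?thesis using assms unfolding psd_def by (simp add: cadj_scaleR)
qed


lemma PQ_sum: "(1/2::real) *\<^sub>R (mat 1 + (1::real) *\<^sub>R A) + (1/2::real) *\<^sub>R (mat 1 + (-1::real) *\<^sub>R A) = (mat 1 :: complex^'d^'d)"
proof -
  have e1: "(1/2::real) *\<^sub>R (mat 1 + (1::real) *\<^sub>R A) + (1/2::real) *\<^sub>R (mat 1 + (-1::real) *\<^sub>R A)
     = (1/2::real) *\<^sub>R ((mat 1 + A) + (mat 1 - A))"
    by (simp only: scaleR_one scaleR_minus1_left scaleR_add_right[symmetric] diff_conv_add_uminus)
  have e2: "(mat 1 + A) + (mat 1 - A) = (mat 1 :: complex^'d^'d) + mat 1" by (simp add: vec_eq_iff)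
  have e3: "(1/2::real) *\<^sub>R ((mat 1 :: complex^'d^'d) + mat 1) = mat 1"
    by (simp only: scaleR_2[symmetric] scaleR_scaleR) simp
  show ?thesis by (simp only: e1 e2 e3)
qed
lemma PQ_diff: "(1/2::real) *\<^sub>R (mat 1 + (1::real) *\<^sub>R A) - (1/2::real) *\<^sub>R (mat 1 + (-1::real) *\<^sub>R A) = (A :: complex^'d^'d)"
proof -
  have e1: "(1/2::real) *\<^sub>R (mat 1 + (1::real) *\<^sub>R A) - (1/2::real) *\<^sub>R (mat 1 + (-1::real) *\<^sub>R A)
     = (1/2::real) *\<^sub>R ((mat 1 + A) - (mat 1 + - A))"
    by (simp only: scaleR_one scaleR_minus1_left scaleR_diff_right[symmetric])
  have e2: "(mat 1 + A) - (mat 1 + - A) = A + (A :: complex^'d^'d)" by (simp add: vec_eq_iff)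
  have e3: "(1/2::real) *\<^sub>R (A + (A :: complex^'d^'d)) = A"
    by (simp only: scaleR_2[symmetric] scaleR_scaleR) simp
  show ?thesis by (simp only: e1 e2 e3)
qed
lemma A_R:
  fixes A :: "complex^'d^'d"
  assumes sq: "A ** A = mat 1" and s: "s = 1 \<or> s = -1"
  shows "A ** ((1/2::real) *\<^sub>R (mat 1 + s *\<^sub>R A)) = s *\<^sub>R ((1/2::real) *\<^sub>R (mat 1 + s *\<^sub>R A))"
proof -
  have ss: "s * s = 1" using s by auto
  have "A ** (mat 1 + s *\<^sub>R A) = s *\<^sub>R (mat 1 + s *\<^sub>R A)"
    by (simp only: matrix_add_ldistrib matrix_mul_rid mm_scaleR_r sq scaleR_add_right scaleR_scaleR ss scaleR_one add.commute)
  then show ?thesis by (simp only: mm_scaleR_r scaleR_scaleR mult.commute)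
qed

theorem theorem2:
  fixes A :: "'x::finite \<Rightarrow> complex^'d^'d"
    and F :: "'x \<Rightarrow> nat \<Rightarrow> complex^'d^'d"
  assumes dim: "CARD('d) = 2 ^ CARD('x)"
    and herm: "\<And>x. cadj (A x) = A x"
    and anticomm: "\<And>x y. A x ** A y + A y ** A x = (if x = y then mat 2 else mat 0)"
    and F1: "\<And>x. F x 1 = (1/2::real) *\<^sub>R A x"
    and F2: "\<And>x. F x 2 = - ((1/2::real) *\<^sub>R A x)"
  shows "violation F \<ge> sqrt (real CARD('x) / 2)"
proof -
  let ?n = "real CARD('x)"
  let ?d = "real CARD('d)"
  have sqA: "A x ** A x = mat 1" for x using anticomm[of x x] by (simp add: sq_from_double)
  have pe: "pairing F \<sigma> = (\<Sum>x\<in>UNIV. (1/2::real) *\<^sub>R trace (A x ** \<sigma> x 1) - (1/2::real) *\<^sub>R trace (A x ** \<sigma> x 2))" for \<sigma>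
    by (rule pairing_eq[OF F1 F2])
  have dpos: "?d > 0" by simp
  have Qb: "cmod (pairing F \<sigma>) \<le> ?n / 2" if as: "assemblage \<sigma>" for \<sigma>
  proof -
    have ps: "psd (\<sigma> x 1)" "psd (\<sigma> x 2)" for x using as unfolding assemblage_def by auto
    have tr: "Re (trace (\<sigma> x 1)) + Re (trace (\<sigma> x 2)) = 1" for x
      using as unfolding assemblage_def by (metis one_complex.sel(1) plus_complex.sel(1) trace_add)
    have "cmod (pairing F \<sigma>) \<le> (\<Sum>x\<in>UNIV. cmod ((1/2::real) *\<^sub>R trace (A x ** \<sigma> x 1) - (1/2::real) *\<^sub>R trace (A x ** \<sigma> x 2)))"
      unfolding pe by (rule norm_sum)
    also have "\<dots> \<le> (\<Sum>x::'x\<in>UNIV. 1/2)"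
    proof (rule sum_mono)
      fix x
      have "cmod ((1/2::real) *\<^sub>R trace (A x ** \<sigma> x 1) - (1/2::real) *\<^sub>R trace (A x ** \<sigma> x 2))
          \<le> cmod ((1/2::real) *\<^sub>R trace (A x ** \<sigma> x 1)) + cmod ((1/2::real) *\<^sub>R trace (A x ** \<sigma> x 2))"
        by (rule norm_triangle_ineq4)
      also have "\<dots> = 1/2 * \<bar>Re (trace (A x ** \<sigma> x 1))\<bar> + 1/2 * \<bar>Re (trace (A x ** \<sigma> x 2))\<bar>"
        using key(2)[OF herm sqA ps(1)] key(2)[OF herm sqA ps(2)] by (simp add: cmod_eq_Re)
      also have "\<dots> \<le> 1/2 * Re (trace (\<sigma> x 1)) + 1/2 * Re (trace (\<sigma> x 2))"
        using key(4)[OF herm[of x] sqA[of x] ps(1)[of x]] key(4)[OF herm[of x] sqA[of x] ps(2)[of x]] by linarith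
      also have "\<dots> = 1/2" using tr[of x] by simp
      finally show "cmod ((1/2::real) *\<^sub>R trace (A x ** \<sigma> x 1) - (1/2::real) *\<^sub>R trace (A x ** \<sigma> x 2)) \<le> 1/2" .
    qed
    also have "\<dots> = ?n / 2" by simp
    finally show ?thesis .
  qed
  define P where "P x = (1/2::real) *\<^sub>R (mat 1 + (1::real) *\<^sub>R A x)" for x
  define Q where "Q x = (1/2::real) *\<^sub>R (mat 1 + (-1::real) *\<^sub>R A x)" for x
  define \<sigma>0 where "\<sigma>0 x a = (if a = 1 then (1 / ?d) *\<^sub>R P x else (1 / ?d) *\<^sub>R Q x)" for x and a :: nat
  have psdP: "psd (P x)" for x unfolding P_def
    using invol_proj[OF herm sqA, of 1] by (intro psd_proj) auto
  have psdQ: "psd (Q x)" for x unfolding Q_def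
    using invol_proj[OF herm sqA, of "-1"] by (intro psd_proj) auto
  have PQs: "P x + Q x = mat 1" for x unfolding P_def Q_def by (rule PQ_sum)
  have PQd: "P x - Q x = A x" for x unfolding P_def Q_def by (rule PQ_diff)
  have s01: "\<sigma>0 x 1 = (1 / ?d) *\<^sub>R P x" "\<sigma>0 x 2 = (1 / ?d) *\<^sub>R Q x" for x
    by (simp_all add: \<sigma>0_def)
  have sum0: "\<sigma>0 x 1 + \<sigma>0 x 2 = (1 / ?d) *\<^sub>R mat 1" for x
    by (simp only: s01 scaleR_add_right[symmetric] PQs)
  have asm0: "assemblage \<sigma>0"
    unfolding assemblage_def
  proof (intro conjI allI ballI)
    fix x and a :: nat assume "a \<in> {1,2}"
    show "psd (\<sigma>0 x a)" unfolding \<sigma>0_def using psdP psdQ by (auto intro: psd_scale)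
  next
    fix x y show "\<sigma>0 x 1 + \<sigma>0 x 2 = \<sigma>0 y 1 + \<sigma>0 y 2" by (simp only: sum0)
  next
    fix x show "trace (\<sigma>0 x 1 + \<sigma>0 x 2) = 1" unfolding sum0 trace_scaleR trace_I
      using dpos by (simp add: scaleR_conv_of_real)
  qed
  have pair0: "pairing F \<sigma>0 = complex_of_real (?n / 2)"
  proof -
    have h: "(1/2::real) *\<^sub>R trace (A x ** \<sigma>0 x 1) - (1/2::real) *\<^sub>R trace (A x ** \<sigma>0 x 2) = complex_of_real (1/2)" for x
    proof -
      have "(1/2::real) *\<^sub>R trace (A x ** \<sigma>0 x 1) - (1/2::real) *\<^sub>R trace (A x ** \<sigma>0 x 2)
          = (1/2::real) *\<^sub>R trace (A x ** (\<sigma>0 x 1 - \<sigma>0 x 2))"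
        by (simp add: mm_diff_l trace_sub scaleR_diff_right)
      also have "\<sigma>0 x 1 - \<sigma>0 x 2 = (1 / ?d) *\<^sub>R A x"
        by (simp only: s01 scaleR_diff_right[symmetric] PQd)
      also have "(1/2::real) *\<^sub>R trace (A x ** ((1 / ?d) *\<^sub>R A x)) = complex_of_real (1/2)"
        using dpos by (simp only: mm_scaleR_r trace_scaleR sqA trace_I) (simp add: scaleR_conv_of_real)
      finally show ?thesis .
    qed
    have "pairing F \<sigma>0 = (\<Sum>x::'x\<in>UNIV. complex_of_real (1/2))" unfolding pe by (simp only: h)
    then show ?thesis by simp
  qed
  have bddQ: "bdd_above {cmod (pairing F \<sigma>) | \<sigma>. assemblage \<sigma>}"
    using Qb by (auto intro!: bdd_aboveI[of _ "?n/2"])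
  have SQ: "S_Q F \<ge> ?n / 2"
    unfolding S_Q_def
  proof (rule cSup_upper2[OF _ _ bddQ, of "cmod (pairing F \<sigma>0)"])
    show "cmod (pairing F \<sigma>0) \<in> {cmod (pairing F \<sigma>) | \<sigma>. assemblage \<sigma>}" using asm0 by blast
    have "cmod (pairing F \<sigma>0) = \<bar>?n / 2\<bar>" unfolding pair0 by (rule norm_of_real)
    then show "?n / 2 \<le> cmod (pairing F \<sigma>0)" by simp
  qed
  have Lb: "cmod (pairing F \<sigma>) \<le> sqrt ?n / 2" if lm: "lhs_model \<sigma>" for \<sigma>
  proof -
    obtain m :: nat and q \<rho> p where q0: "\<forall>l<m. 0 \<le> q l" and qs: "(\<Sum>l<m. q l) = 1"
      and dens: "\<forall>l<m. density (\<rho> l)"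
      and pp: "\<forall>l<m. \<forall>x. 0 \<le> p l x 1 \<and> 0 \<le> p l x 2 \<and> p l x 1 + p l x 2 = 1"
      and sd: "\<forall>x. \<forall>a\<in>{1,2}. \<sigma> x a = (\<Sum>l<m. (q l * p l x a) *\<^sub>R \<rho> l)"
      using lm unfolding lhs_model_def by blast
    define T where "T x l = trace (A x ** \<rho> l)" for x l
    have tr: "trace (A x ** \<sigma> x a) = (\<Sum>l<m. (q l * p l x a) *\<^sub>R T x l)" if "a \<in> {1,2}" for x a
    proof -
      have "\<sigma> x a = (\<Sum>l<m. (q l * p l x a) *\<^sub>R \<rho> l)" using sd that by blast
      then show ?thesis unfolding T_def by (simp add: trace_lin)
    qed
    have cT: "cmod (T x l) = \<bar>Re (T x l)\<bar>" if "l < m" for x l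
    proof -
      have "psd (\<rho> l)" using dens that density_def by blast
      then have "Im (T x l) = 0" unfolding T_def by (rule key(2)[OF herm[of x] sqA[of x]])
      then show ?thesis by (rule cmod_eq_Re)
    qed
    have n1: "cmod (\<Sum>l<m. (q l * p l x a) *\<^sub>R T x l) \<le> (\<Sum>l<m. q l * p l x a * \<bar>Re (T x l)\<bar>)"
      if "a \<in> {1,2}" for x a
    proof -
      have "cmod (\<Sum>l<m. (q l * p l x a) *\<^sub>R T x l) \<le> (\<Sum>l<m. cmod ((q l * p l x a) *\<^sub>R T x l))"
        by (rule norm_sum)
      also have "(\<Sum>l<m. cmod ((q l * p l x a) *\<^sub>R T x l)) = (\<Sum>l<m. q l * p l x a * \<bar>Re (T x l)\<bar>)"
      proof (rule sum.cong[OF refl])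
        fix l assume "l \<in> {..<m}"
        then have l: "l < m" by simp
        have "0 \<le> q l * p l x a" using q0 pp l that by auto
        then show "cmod ((q l * p l x a) *\<^sub>R T x l) = q l * p l x a * \<bar>Re (T x l)\<bar>"
          using cT[OF l] by simp
      qed
      finally show ?thesis .
    qed
    have tb: "cmod ((1/2::real) *\<^sub>R trace (A x ** \<sigma> x 1) - (1/2::real) *\<^sub>R trace (A x ** \<sigma> x 2))
        \<le> 1/2 * (\<Sum>l<m. q l * \<bar>Re (T x l)\<bar>)" for x
    proof -
      have "cmod ((1/2::real) *\<^sub>R trace (A x ** \<sigma> x 1) - (1/2::real) *\<^sub>R trace (A x ** \<sigma> x 2))
          \<le> cmod ((1/2::real) *\<^sub>R trace (A x ** \<sigma> x 1)) + cmod ((1/2::real) *\<^sub>R trace (A x ** \<sigma> x 2))"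
        by (rule norm_triangle_ineq4)
      moreover have "cmod ((1/2::real) *\<^sub>R trace (A x ** \<sigma> x 1)) \<le> 1/2 * (\<Sum>l<m. q l * p l x 1 * \<bar>Re (T x l)\<bar>)"
        using n1[of 1 x] tr[of 1 x] by simp
      moreover have "cmod ((1/2::real) *\<^sub>R trace (A x ** \<sigma> x 2)) \<le> 1/2 * (\<Sum>l<m. q l * p l x 2 * \<bar>Re (T x l)\<bar>)"
        using n1[of 2 x] tr[of 2 x] by simp
      moreover have "(\<Sum>l<m. q l * p l x 1 * \<bar>Re (T x l)\<bar>) + (\<Sum>l<m. q l * p l x 2 * \<bar>Re (T x l)\<bar>)
          = (\<Sum>l<m. q l * \<bar>Re (T x l)\<bar>)"
      proof -
        have "(\<Sum>l<m. q l * p l x 1 * \<bar>Re (T x l)\<bar>) + (\<Sum>l<m. q l * p l x 2 * \<bar>Re (T x l)\<bar>)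
            = (\<Sum>l<m. q l * (p l x 1 + p l x 2) * \<bar>Re (T x l)\<bar>)"
          by (simp add: sum.distrib[symmetric] algebra_simps)
        also have "\<dots> = (\<Sum>l<m. q l * \<bar>Re (T x l)\<bar>)"
          by (rule sum.cong[OF refl]) (use pp in auto)
        finally show ?thesis .
      qed
      ultimately show ?thesis by linarith
    qed
    have "cmod (pairing F \<sigma>) \<le> (\<Sum>x\<in>UNIV. cmod ((1/2::real) *\<^sub>R trace (A x ** \<sigma> x 1) - (1/2::real) *\<^sub>R trace (A x ** \<sigma> x 2)))"
      unfolding pe by (rule norm_sum)
    also have "\<dots> \<le> (\<Sum>x\<in>UNIV. 1/2 * (\<Sum>l<m. q l * \<bar>Re (T x l)\<bar>))"
      by (rule sum_mono) (rule tb)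
    also have "\<dots> = 1/2 * (\<Sum>l<m. q l * (\<Sum>x\<in>UNIV. \<bar>Re (T x l)\<bar>))"
    proof -
      have A1: "(\<Sum>x\<in>UNIV. 1/2 * (\<Sum>l<m. q l * \<bar>Re (T x l)\<bar>)) = 1/2 * (\<Sum>x\<in>UNIV. \<Sum>l<m. q l * \<bar>Re (T x l)\<bar>)"
        by (rule sum_distrib_left[symmetric])
      have A2: "(\<Sum>x\<in>UNIV. \<Sum>l<m. q l * \<bar>Re (T x l)\<bar>) = (\<Sum>l<m. \<Sum>x\<in>UNIV. q l * \<bar>Re (T x l)\<bar>)"
        by (rule sum.swap)
      have A3: "(\<Sum>x\<in>UNIV. q l * \<bar>Re (T x l)\<bar>) = q l * (\<Sum>x\<in>UNIV. \<bar>Re (T x l)\<bar>)" for l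
        by (rule sum_distrib_left[symmetric])
      show ?thesis by (simp only: A1 A2 A3)
    qed
    also have "\<dots> \<le> 1/2 * (\<Sum>l<m. q l * sqrt ?n)"
    proof -
      have "(\<Sum>l<m. q l * (\<Sum>x\<in>UNIV. \<bar>Re (T x l)\<bar>)) \<le> (\<Sum>l<m. q l * sqrt ?n)"
      proof (rule sum_mono)
        fix l assume "l \<in> {..<m}"
        then have l: "l < m" by simp
        have "(\<Sum>x\<in>UNIV. \<bar>Re (T x l)\<bar>) \<le> sqrt ?n"
          unfolding T_def by (rule density_bound[OF herm anticomm]) (use dens l in auto)
        then show "q l * (\<Sum>x\<in>UNIV. \<bar>Re (T x l)\<bar>) \<le> q l * sqrt ?n"
          using q0 l by (simp add: mult_left_mono)
      qed
      then show ?thesis by simp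
    qed
    also have "\<dots> = sqrt ?n / 2" by (simp add: sum_distrib_right[symmetric] qs)
    finally show ?thesis .
  qed
  obtain x0 :: 'x where True by blast
  define R where "R s = (1/2::real) *\<^sub>R (mat 1 + s *\<^sub>R A x0)" for s :: real
  have Rp: "psd (R s)" if "s = 1 \<or> s = -1" for s
    unfolding R_def using invol_proj[OF herm sqA that] by (intro psd_proj) auto
  have Rtr: "Im (trace (R s)) = 0 \<and> 0 \<le> Re (trace (R s))" if "s = 1 \<or> s = -1" for s
    using key(1,3)[OF herm sqA Rp[OF that]] by simp
  have "trace (R 1) + trace (R (-1)) = of_nat CARD('d)"
    unfolding R_def by (simp only: trace_add[symmetric] PQ_sum trace_I)
  then have "Re (trace (R 1) + trace (R (-1))) = ?d" by simp
  then have sumRe: "Re (trace (R 1)) + Re (trace (R (-1))) = ?d" by simp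
  have "\<exists>s. (s = 1 \<or> s = -1) \<and> Re (trace (R s)) > 0"
  proof (cases "Re (trace (R 1)) > 0")
    case True then show ?thesis by blast
  next
    case False
    then have "Re (trace (R (-1))) > 0" using sumRe dpos by linarith
    then show ?thesis by blast
  qed
  then obtain s where s: "s = 1 \<or> s = -1" and rpos: "Re (trace (R s)) > 0" by blast
  define r where "r = Re (trace (R s))"
  have trR: "trace (R s) = complex_of_real r" using Rtr[OF s] unfolding r_def by (simp add: complex_eq_iff)
  define \<rho>0 where "\<rho>0 = (1 / r) *\<^sub>R R s"
  have dens0: "density \<rho>0"
  proof -
    have "psd \<rho>0" unfolding \<rho>0_def by (rule psd_scale[OF Rp[OF s]]) (use rpos r_def in simp)
    moreover have "trace \<rho>0 = complex_of_real ((1/r) * r)"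
      unfolding \<rho>0_def trace_scaleR trR by (simp only: scaleR_conv_of_real of_real_mult)
    moreover have "(1/r) * r = 1" using rpos r_def by simp
    ultimately show ?thesis unfolding density_def by simp
  qed
  have tA: "trace (A x0 ** \<rho>0) = complex_of_real s"
  proof -
    have AR: "A x0 ** R s = s *\<^sub>R R s" unfolding R_def by (rule A_R[OF sqA s])
    have "trace (A x0 ** \<rho>0) = ((1/r) * s) *\<^sub>R trace (R s)"
      unfolding \<rho>0_def by (simp only: mm_scaleR_r AR trace_scaleR scaleR_scaleR)
    also have "\<dots> = complex_of_real ((1/r) * s * r)"
      unfolding trR by (simp only: scaleR_conv_of_real of_real_mult)
    also have "(1/r) * s * r = s" using rpos r_def by simp
    finally show ?thesis .
  qed
  define p0 where "p0 (l::nat) x a = (if a = (1::nat) then (if x = x0 then 1 else 1/2) else (if x = x0 then 0 else (1/2::real)))" for l x a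
  define \<sigma>1 where "\<sigma>1 x a = (\<Sum>l<(1::nat). ((\<lambda>_. 1::real) l * p0 l x a) *\<^sub>R (\<lambda>_. \<rho>0) l)" for x a
  have lm1: "lhs_model \<sigma>1"
    unfolding lhs_model_def
    apply (rule exI[of _ 1], rule exI[of _ "\<lambda>_. 1"], rule exI[of _ "\<lambda>_. \<rho>0"], rule exI[of _ p0])
    using dens0 by (simp add: \<sigma>1_def p0_def)
  have s1: "\<sigma>1 x a = p0 0 x a *\<^sub>R \<rho>0" for x a unfolding \<sigma>1_def by simp
  have pair1: "pairing F \<sigma>1 = (1/2::real) *\<^sub>R complex_of_real s"
  proof -
    have "(1/2::real) *\<^sub>R trace (A x ** \<sigma>1 x 1) - (1/2::real) *\<^sub>R trace (A x ** \<sigma>1 x 2)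
        = (if x = x0 then (1/2::real) *\<^sub>R complex_of_real s else 0)" for x
      by (simp add: s1 p0_def mm_scaleR_r trace_scaleR tA)
    then show ?thesis unfolding pe by simp
  qed
  have SLnonempty: "{cmod (pairing F \<sigma>) | \<sigma>. lhs_model \<sigma>} \<noteq> {}" using lm1 by blast
  have bddL: "bdd_above {cmod (pairing F \<sigma>) | \<sigma>. lhs_model \<sigma>}"
    using Lb by (auto intro!: bdd_aboveI[of _ "sqrt ?n / 2"])
  have SL1: "S_LHS F \<ge> 1/2"
    unfolding S_LHS_def
  proof (rule cSup_upper2[OF _ _ bddL, of "cmod (pairing F \<sigma>1)"])
    show "cmod (pairing F \<sigma>1) \<in> {cmod (pairing F \<sigma>) | \<sigma>. lhs_model \<sigma>}" using lm1 by blast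
    have "cmod (pairing F \<sigma>1) = \<bar>1/2\<bar> * \<bar>s\<bar>" unfolding pair1 by simp
    then show "1/2 \<le> cmod (pairing F \<sigma>1)" using s by auto
  qed
  have SL2: "S_LHS F \<le> sqrt ?n / 2"
    unfolding S_LHS_def by (rule cSup_least[OF SLnonempty]) (use Lb in auto)
  have "sqrt (?n / 2) \<le> sqrt ?n" by simp
  also have "sqrt ?n = (?n / 2) / (sqrt ?n / 2)" using real_div_sqrt[of ?n] by simp
  also have "\<dots> \<le> S_Q F / S_LHS F"
    by (rule frac_le) (use SQ SL1 SL2 in auto)
  finally show ?thesis unfolding violation_def .
qed

end
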